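(* Let $B$ be a connected board (a region) and $S$ a set of sinks of $B$. Then the large tilt graph $G_L(B,S)$ is weakly connected.
   Context: Pixels are unit squares indexed by $\mathbb{Z}^2$. A board $B=(V,E)$ is a finite subgraph of the square grid graph on $\mathbb{Z}^2$; its boundary consists of all pixel sides not shared with a neighbouring pixel joined by an edge of $E$. A set $S\subseteq V$ of pixels are sinks. For a pixel $p$, its row (column) segment is the maximal set of pixels reachable from $p$ using only horizontal (vertical) edges of $E$; $p^\ell,p^r$ are the leftmost/rightmost pixels of its row segment and $p^u,p^d$ the topmost/bottommost pixels of its column segment. The full tilt graph $G_F(B)$ is the directed graph on $V$ with edges $(p,p^x)$ for $x\in\{\ell,r,u,d\}$ with $p^x\neq p$. A corner pixel is a pixel $p$ with $p=p^x=p^y$ for some $x\in\{\ell,r\}$, $y\in\{u,d\}$. The large tilt graph $G_L(B,S)$ is the subgraph of $G_F(B)$ induced by the vertex set consisting of (i) all pixels reachable in $G_F(B)$ from corner pixels, (ii) every sink $s$ and $s^\ell,s^r,s^u,s^d$, (iii) for every reflex corner of the boundary, the leftmost and rightmost pixels of the row segments and the topmost and bottommost pixels of the column segments of the pixels incident to that corner, and (iv) all pixels on the intersection of a row segment and a column segment each containing a pixel included in (i)–(iii). Weakly connected means connected when edge directions are ignored. *)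

theory Defs
  imports Main
begin

text \<open>Pixels are unit squares indexed by integer pairs (x,y); pixel (x,y) is the
square [x,x+1] x [y,y+1]. "Up" means increasing y, "right" increasing x.\<close>

type_synonym pixel = "int \<times> int"

definition grid_adj :: "pixel \<Rightarrow> pixel \<Rightarrow> bool" where
  "grid_adj p q \<longleftrightarrow> \<bar>fst p - fst q\<bar> + \<bar>snd p - snd q\<bar> = 1"

definition board :: "pixel set \<Rightarrow> pixel set set \<Rightarrow> bool" where
  "board V E \<longleftrightarrow> finite V \<and>
     (\<forall>e\<in>E. \<exists>p q. e = {p, q} \<and> p \<in> V \<and> q \<in> V \<and> grid_adj p q)"

definition joined :: "pixel set set \<Rightarrow> pixel \<Rightarrow> pixel \<Rightarrow> bool" where
  "joined E p q \<longleftrightarrow> {p, q} \<in> E"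

definition connected_board :: "pixel set \<Rightarrow> pixel set set \<Rightarrow> bool" where
  "connected_board V E \<longleftrightarrow> board V E \<and> V \<noteq> {} \<and>
     (\<forall>p\<in>V. \<forall>q\<in>V. (p, q) \<in> {(a, b). joined E a b}\<^sup>*)"

definition hor_rel :: "pixel set set \<Rightarrow> (pixel \<times> pixel) set" where
  "hor_rel E = {(p, q). joined E p q \<and> snd p = snd q}"

definition ver_rel :: "pixel set set \<Rightarrow> (pixel \<times> pixel) set" where
  "ver_rel E = {(p, q). joined E p q \<and> fst p = fst q}"

definition row_seg :: "pixel set set \<Rightarrow> pixel \<Rightarrow> pixel set" where
  "row_seg E p = {q. (p, q) \<in> (hor_rel E)\<^sup>*}"

definition col_seg :: "pixel set set \<Rightarrow> pixel \<Rightarrow> pixel set" where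
  "col_seg E p = {q. (p, q) \<in> (ver_rel E)\<^sup>*}"

datatype dir = L | R | U | D

definition tilt :: "pixel set set \<Rightarrow> dir \<Rightarrow> pixel \<Rightarrow> pixel" where
  "tilt E d p = (case d of
      L \<Rightarrow> (THE q. q \<in> row_seg E p \<and> (\<forall>q'\<in>row_seg E p. fst q \<le> fst q'))
    | R \<Rightarrow> (THE q. q \<in> row_seg E p \<and> (\<forall>q'\<in>row_seg E p. fst q' \<le> fst q))
    | U \<Rightarrow> (THE q. q \<in> col_seg E p \<and> (\<forall>q'\<in>col_seg E p. snd q' \<le> snd q))
    | D \<Rightarrow> (THE q. q \<in> col_seg E p \<and> (\<forall>q'\<in>col_seg E p. snd q \<le> snd q')))"

definition full_tilt_graph :: "pixel set \<Rightarrow> pixel set set \<Rightarrow> (pixel \<times> pixel) set" where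
  "full_tilt_graph V E = {(p, tilt E d p) | p d. p \<in> V \<and> tilt E d p \<noteq> p}"

definition corner_pixel :: "pixel set \<Rightarrow> pixel set set \<Rightarrow> pixel \<Rightarrow> bool" where
  "corner_pixel V E p \<longleftrightarrow> p \<in> V \<and>
     (\<exists>x\<in>{L, R}. \<exists>y\<in>{U, D}. tilt E x p = p \<and> tilt E y p = p)"

text \<open>The four pixels around the lattice point (a,b), in cyclic order NE, NW, SW, SE.
Consecutive pixels in this list (cyclically) share a side incident to (a,b).\<close>
definition quadrants :: "int \<times> int \<Rightarrow> pixel list" where
  "quadrants v = [(fst v, snd v), (fst v - 1, snd v), (fst v - 1, snd v - 1), (fst v, snd v - 1)]"

text \<open>A lattice point v is a reflex corner of the boundary if the board, locally at v,
contains three cyclically consecutive quadrant pixels connected through the two sides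
between them (a 270 degree local angle), and the boundary passes through v, i.e. at
least one of the remaining two sides at v is a boundary side.\<close>
definition reflex_corner :: "pixel set set \<Rightarrow> int \<times> int \<Rightarrow> bool" where
  "reflex_corner E v \<longleftrightarrow> (\<exists>i<4. let q = (\<lambda>k. quadrants v ! ((i + k) mod 4)) in
      joined E (q 0) (q 1) \<and> joined E (q 1) (q 2) \<and>
      \<not> (joined E (q 2) (q 3) \<and> joined E (q 3) (q 0)))"

definition incident_pixels :: "pixel set \<Rightarrow> int \<times> int \<Rightarrow> pixel set" where
  "incident_pixels V v = {q \<in> set (quadrants v). q \<in> V}"

definition large_tilt_base :: "pixel set \<Rightarrow> pixel set set \<Rightarrow> pixel set \<Rightarrow> pixel set" where
  "large_tilt_base V E S =
     {p. \<exists>c. corner_pixel V E c \<and> (c, p) \<in> (full_tilt_graph V E)\<^sup>*}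
     \<union> S \<union> {tilt E d s | s d. s \<in> S}
     \<union> {tilt E d q | q d. \<exists>v. reflex_corner E v \<and> q \<in> incident_pixels V v}"

definition large_tilt_vertices :: "pixel set \<Rightarrow> pixel set set \<Rightarrow> pixel set \<Rightarrow> pixel set" where
  "large_tilt_vertices V E S = large_tilt_base V E S \<union>
     {q \<in> V. \<exists>a\<in>large_tilt_base V E S. \<exists>b\<in>large_tilt_base V E S.
        q \<in> row_seg E a \<and> q \<in> col_seg E b}"

definition large_tilt_graph :: "pixel set \<Rightarrow> pixel set set \<Rightarrow> pixel set \<Rightarrow> (pixel \<times> pixel) set" where
  "large_tilt_graph V E S = full_tilt_graph V E \<inter>
     (large_tilt_vertices V E S \<times> large_tilt_vertices V E S)"

definition weakly_connected :: "'a set \<Rightarrow> ('a \<times> 'a) set \<Rightarrow> bool" where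
  "weakly_connected W F \<longleftrightarrow> (\<forall>p\<in>W. \<forall>q\<in>W. (p, q) \<in> (F \<union> F\<inverse>)\<^sup>*)"

end

theory Submission
  imports Defs
begin


lemma joined_sym: "joined E a b = joined E b a"
  by (simp add: joined_def insert_commute)

lemma joined_board:
  assumes "board V E" "joined E a b"
  shows "a \<in> V \<and> b \<in> V \<and> grid_adj a b"
proof -
  from assms obtain p q where "{a,b} = {p,q}" "p \<in> V" "q \<in> V" "grid_adj p q"
    unfolding board_def joined_def by blast
  then show ?thesis by (auto simp: doubleton_eq_iff grid_adj_def abs_minus_commute)
qed

lemma hor_rtr_sym: "(a,b) \<in> (hor_rel E)\<^sup>* \<Longrightarrow> (b,a) \<in> (hor_rel E)\<^sup>*"
proof (induction rule: rtrancl_induct)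
  case base then show ?case by simp
next
  case (step y z)
  then have "(z,y) \<in> hor_rel E" by (auto simp: hor_rel_def joined_sym)
  then show ?case using step.IH by (rule converse_rtrancl_into_rtrancl)
qed

lemma ver_rtr_sym: "(a,b) \<in> (ver_rel E)\<^sup>* \<Longrightarrow> (b,a) \<in> (ver_rel E)\<^sup>*"
proof (induction rule: rtrancl_induct)
  case base then show ?case by simp
next
  case (step y z)
  then have "(z,y) \<in> ver_rel E" by (auto simp: ver_rel_def joined_sym)
  then show ?case using step.IH by (rule converse_rtrancl_into_rtrancl)
qed

lemma row_seg_self: "p \<in> row_seg E p" by (simp add: row_seg_def)
lemma col_seg_self: "p \<in> col_seg E p" by (simp add: col_seg_def)

lemma row_seg_eq: assumes "q \<in> row_seg E p" shows "row_seg E q = row_seg E p"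
proof -
  have pq: "(p,q) \<in> (hor_rel E)\<^sup>*" using assms by (simp add: row_seg_def)
  have qp: "(q,p) \<in> (hor_rel E)\<^sup>*" using hor_rtr_sym[OF pq] .
  show ?thesis unfolding row_seg_def using rtrancl_trans[OF pq] rtrancl_trans[OF qp] by blast
qed
lemma col_seg_eq: assumes "q \<in> col_seg E p" shows "col_seg E q = col_seg E p"
proof -
  have pq: "(p,q) \<in> (ver_rel E)\<^sup>*" using assms by (simp add: col_seg_def)
  have qp: "(q,p) \<in> (ver_rel E)\<^sup>*" using ver_rtr_sym[OF pq] .
  show ?thesis unfolding col_seg_def using rtrancl_trans[OF pq] rtrancl_trans[OF qp] by blast
qed

lemma row_seg_symm: "q \<in> row_seg E p \<Longrightarrow> p \<in> row_seg E q"
  unfolding row_seg_def by (simp add: hor_rtr_sym)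
lemma col_seg_symm: "q \<in> col_seg E p \<Longrightarrow> p \<in> col_seg E q"
  unfolding col_seg_def by (simp add: ver_rtr_sym)

lemma hor_path:
  assumes "board V E" "(y,q) \<in> (hor_rel E)\<^sup>*"
  shows "snd q = snd y \<and> (q = y \<or> q \<in> V) \<and> (fst q < fst y \<longrightarrow> joined E y (fst y - 1, snd y))
     \<and> (fst q > fst y \<longrightarrow> joined E y (fst y + 1, snd y))"
  using assms(2)
proof (induction rule: rtrancl_induct)
  case base then show ?case by simp
next
  case (step q q')
  from step.hyps(2) have j: "joined E q q'" "snd q = snd q'" by (auto simp: hor_rel_def)
  with joined_board[OF assms(1) j(1)] have a: "\<bar>fst q - fst q'\<bar> = 1" "q' \<in> V" by (auto simp: grid_adj_def)
  have "fst q' < fst y \<longrightarrow> joined E y (fst y - 1, snd y)"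
  proof
    assume "fst q' < fst y"
    show "joined E y (fst y - 1, snd y)"
    proof (cases "fst q < fst y")
      case True then show ?thesis using step.IH by blast
    next
      case False
      then have "fst q = fst y" "fst q' = fst y - 1" using a \<open>fst q' < fst y\<close> by auto
      then have "q = y" "q' = (fst y - 1, snd y)" using step.IH j by (auto simp: prod_eq_iff)
      then show ?thesis using j by simp
    qed
  qed
  moreover have "fst q' > fst y \<longrightarrow> joined E y (fst y + 1, snd y)"
  proof
    assume "fst q' > fst y"
    show "joined E y (fst y + 1, snd y)"
    proof (cases "fst q > fst y")
      case True then show ?thesis using step.IH by blast
    next
      case False
      then have "fst q = fst y" "fst q' = fst y + 1" using a \<open>fst q' > fst y\<close> by auto
      then have "q = y" "q' = (fst y + 1, snd y)" using step.IH j by (auto simp: prod_eq_iff)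
      then show ?thesis using j by simp
    qed
  qed
  ultimately show ?case using step.IH j a by auto
qed

lemma ver_path:
  assumes "board V E" "(y,q) \<in> (ver_rel E)\<^sup>*"
  shows "fst q = fst y \<and> (q = y \<or> q \<in> V) \<and> (snd q < snd y \<longrightarrow> joined E y (fst y, snd y - 1))
     \<and> (snd q > snd y \<longrightarrow> joined E y (fst y, snd y + 1))"
  using assms(2)
proof (induction rule: rtrancl_induct)
  case base then show ?case by simp
next
  case (step q q')
  from step.hyps(2) have j: "joined E q q'" "fst q = fst q'" by (auto simp: ver_rel_def)
  with joined_board[OF assms(1) j(1)] have a: "\<bar>snd q - snd q'\<bar> = 1" "q' \<in> V" by (auto simp: grid_adj_def)
  have "snd q' < snd y \<longrightarrow> joined E y (fst y, snd y - 1)"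
  proof
    assume "snd q' < snd y"
    show "joined E y (fst y, snd y - 1)"
    proof (cases "snd q < snd y")
      case True then show ?thesis using step.IH by blast
    next
      case False
      then have "snd q = snd y" "snd q' = snd y - 1" using a \<open>snd q' < snd y\<close> by auto
      then have "q = y" "q' = (fst y, snd y - 1)" using step.IH j by (auto simp: prod_eq_iff)
      then show ?thesis using j by simp
    qed
  qed
  moreover have "snd q' > snd y \<longrightarrow> joined E y (fst y, snd y + 1)"
  proof
    assume "snd q' > snd y"
    show "joined E y (fst y, snd y + 1)"
    proof (cases "snd q > snd y")
      case True then show ?thesis using step.IH by blast
    next
      case False
      then have "snd q = snd y" "snd q' = snd y + 1" using a \<open>snd q' > snd y\<close> by auto
      then have "q = y" "q' = (fst y, snd y + 1)" using step.IH j by (auto simp: prod_eq_iff)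
      then show ?thesis using j by simp
    qed
  qed
  ultimately show ?case using step.IH j a by auto
qed

lemma the_min:
  fixes A :: "pixel set" and g :: "pixel \<Rightarrow> int"
  assumes "finite A" "A \<noteq> {}" "inj_on g A"
  shows "(THE q. q \<in> A \<and> (\<forall>q'\<in>A. g q \<le> g q')) \<in> A \<and>
         (\<forall>q'\<in>A. g (THE q. q \<in> A \<and> (\<forall>q'\<in>A. g q \<le> g q')) \<le> g q')"
proof -
  have "Min (g ` A) \<in> g ` A" using assms by simp
  then obtain q where q: "q \<in> A" "g q = Min (g ` A)" by force
  have ex: "\<exists>!q. q \<in> A \<and> (\<forall>q'\<in>A. g q \<le> g q')"
  proof
    show "q \<in> A \<and> (\<forall>q'\<in>A. g q \<le> g q')" using q assms by auto
    fix r assume r: "r \<in> A \<and> (\<forall>q'\<in>A. g r \<le> g q')"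
    have "g q \<le> g r" unfolding q(2) using r assms(1) by simp
    then have "g r = g q" using q r by force
    then show "r = q" using inj_onD[OF assms(3)] q r by blast
  qed
  from theI'[OF ex] show ?thesis .
qed

lemma the_max:
  fixes A :: "pixel set" and g :: "pixel \<Rightarrow> int"
  assumes "finite A" "A \<noteq> {}" "inj_on g A"
  shows "(THE q. q \<in> A \<and> (\<forall>q'\<in>A. g q' \<le> g q)) \<in> A \<and>
         (\<forall>q'\<in>A. g q' \<le> g (THE q. q \<in> A \<and> (\<forall>q'\<in>A. g q' \<le> g q)))"
proof -
  have "Max (g ` A) \<in> g ` A" using assms by simp
  then obtain q where q: "q \<in> A" "g q = Max (g ` A)" by force
  have ex: "\<exists>!q. q \<in> A \<and> (\<forall>q'\<in>A. g q' \<le> g q)"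
  proof
    show "q \<in> A \<and> (\<forall>q'\<in>A. g q' \<le> g q)" using q assms by auto
    fix r assume r: "r \<in> A \<and> (\<forall>q'\<in>A. g q' \<le> g r)"
    have "g r \<le> g q" unfolding q(2) using r assms(1) by simp
    then have "g r = g q" using q r by force
    then show "r = q" using inj_onD[OF assms(3)] q r by blast
  qed
  from theI'[OF ex] show ?thesis .
qed

lemma the_min_eq:
  fixes A :: "pixel set" and g :: "pixel \<Rightarrow> int"
  assumes "inj_on g A" "y \<in> A" "\<forall>q'\<in>A. g y \<le> g q'"
  shows "(THE q. q \<in> A \<and> (\<forall>q'\<in>A. g q \<le> g q')) = y"
proof (rule the_equality)
  show "y \<in> A \<and> (\<forall>q'\<in>A. g y \<le> g q')" using assms by auto
  fix r assume r: "r \<in> A \<and> (\<forall>q'\<in>A. g r \<le> g q')"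
  then have "g r = g y" using assms by (meson antisym)
  then show "r = y" using inj_onD[OF assms(1)] assms r by blast
qed

lemma the_max_eq:
  fixes A :: "pixel set" and g :: "pixel \<Rightarrow> int"
  assumes "inj_on g A" "y \<in> A" "\<forall>q'\<in>A. g q' \<le> g y"
  shows "(THE q. q \<in> A \<and> (\<forall>q'\<in>A. g q' \<le> g q)) = y"
proof (rule the_equality)
  show "y \<in> A \<and> (\<forall>q'\<in>A. g q' \<le> g y)" using assms by auto
  fix r assume r: "r \<in> A \<and> (\<forall>q'\<in>A. g q' \<le> g r)"
  then have "g r = g y" using assms by (meson antisym)
  then show "r = y" using inj_onD[OF assms(1)] assms r by blast
qed

lemma row_seg_props:
  assumes "board V E"
  shows "finite (row_seg E p)" "row_seg E p \<noteq> {}" "inj_on fst (row_seg E p)"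
    "q \<in> row_seg E p \<Longrightarrow> snd q = snd p"
    "p \<in> V \<Longrightarrow> row_seg E p \<subseteq> V"
proof -
  have *: "\<And>q. q \<in> row_seg E p \<Longrightarrow> snd q = snd p \<and> (q = p \<or> q \<in> V)"
    using hor_path[OF assms] unfolding row_seg_def by blast
  have "row_seg E p \<subseteq> insert p V" using * by blast
  moreover have "finite V" using assms by (simp add: board_def)
  ultimately show "finite (row_seg E p)" using finite_subset by blast
  show "row_seg E p \<noteq> {}" using row_seg_self by blast
  show "inj_on fst (row_seg E p)"
  proof (rule inj_onI)
    fix x y assume "x \<in> row_seg E p" "y \<in> row_seg E p" "fst x = fst y"
    then show "x = y" using * by (simp add: prod_eq_iff)
  qed
  show "q \<in> row_seg E p \<Longrightarrow> snd q = snd p" using * by blast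
  show "p \<in> V \<Longrightarrow> row_seg E p \<subseteq> V" using * by blast
qed

lemma col_seg_props:
  assumes "board V E"
  shows "finite (col_seg E p)" "col_seg E p \<noteq> {}" "inj_on snd (col_seg E p)"
    "q \<in> col_seg E p \<Longrightarrow> fst q = fst p"
    "p \<in> V \<Longrightarrow> col_seg E p \<subseteq> V"
proof -
  have *: "\<And>q. q \<in> col_seg E p \<Longrightarrow> fst q = fst p \<and> (q = p \<or> q \<in> V)"
    using ver_path[OF assms] unfolding col_seg_def by blast
  have "col_seg E p \<subseteq> insert p V" using * by blast
  moreover have "finite V" using assms by (simp add: board_def)
  ultimately show "finite (col_seg E p)" using finite_subset by blast
  show "col_seg E p \<noteq> {}" using col_seg_self by blast
  show "inj_on snd (col_seg E p)"
  proof (rule inj_onI)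
    fix x y assume "x \<in> col_seg E p" "y \<in> col_seg E p" "snd x = snd y"
    then show "x = y" using * by (simp add: prod_eq_iff)
  qed
  show "q \<in> col_seg E p \<Longrightarrow> fst q = fst p" using * by blast
  show "p \<in> V \<Longrightarrow> col_seg E p \<subseteq> V" using * by blast
qed



lemma tilt_L: assumes "board V E"
  shows "tilt E L p \<in> row_seg E p" "\<forall>q\<in>row_seg E p. fst (tilt E L p) \<le> fst q"
  using the_min[OF row_seg_props(1)[OF assms] row_seg_props(2)[OF assms] row_seg_props(3)[OF assms]]
  unfolding tilt_def by simp_all

lemma tilt_R: assumes "board V E"
  shows "tilt E R p \<in> row_seg E p" "\<forall>q\<in>row_seg E p. fst q \<le> fst (tilt E R p)"
  using the_max[OF row_seg_props(1)[OF assms] row_seg_props(2)[OF assms] row_seg_props(3)[OF assms]]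
  unfolding tilt_def by simp_all

lemma tilt_U: assumes "board V E"
  shows "tilt E U p \<in> col_seg E p" "\<forall>q\<in>col_seg E p. snd q \<le> snd (tilt E U p)"
  using the_max[OF col_seg_props(1)[OF assms] col_seg_props(2)[OF assms] col_seg_props(3)[OF assms]]
  unfolding tilt_def by simp_all

lemma tilt_D: assumes "board V E"
  shows "tilt E D p \<in> col_seg E p" "\<forall>q\<in>col_seg E p. snd (tilt E D p) \<le> snd q"
  using the_min[OF col_seg_props(1)[OF assms] col_seg_props(2)[OF assms] col_seg_props(3)[OF assms]]
  unfolding tilt_def by simp_all

lemma tilt_V: assumes "board V E" "p \<in> V" shows "tilt E d p \<in> V"
proof (cases d)
  case L then show ?thesis using tilt_L(1)[OF assms(1), of p] row_seg_props(5)[OF assms] by auto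
next
  case R then show ?thesis using tilt_R(1)[OF assms(1), of p] row_seg_props(5)[OF assms] by auto
next
  case U then show ?thesis using tilt_U(1)[OF assms(1), of p] col_seg_props(5)[OF assms] by auto
next
  case D then show ?thesis using tilt_D(1)[OF assms(1), of p] col_seg_props(5)[OF assms] by auto
qed

lemma tilt_row_eq: "q \<in> row_seg E p \<Longrightarrow> tilt E L q = tilt E L p"
  unfolding tilt_def by (simp add: row_seg_eq)

lemma tilt_col_eq: "q \<in> col_seg E p \<Longrightarrow> tilt E U q = tilt E U p"
  unfolding tilt_def by (simp add: col_seg_eq)

lemma no_left: assumes "board V E" "\<not> joined E y (fst y - 1, snd y)"
  shows "tilt E L y = y"
proof -
  have "\<forall>q\<in>row_seg E y. fst y \<le> fst q"
  proof
    fix q assume "q \<in> row_seg E y"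
    then have "(y,q) \<in> (hor_rel E)\<^sup>*" by (simp add: row_seg_def)
    from hor_path[OF assms(1) this] assms(2) show "fst y \<le> fst q" by force
  qed
  then show ?thesis unfolding tilt_def
    using the_min_eq[OF row_seg_props(3)[OF assms(1)] row_seg_self] by simp
qed

lemma no_up: assumes "board V E" "\<not> joined E y (fst y, snd y + 1)"
  shows "tilt E U y = y"
proof -
  have "\<forall>q\<in>col_seg E y. snd q \<le> snd y"
  proof
    fix q assume "q \<in> col_seg E y"
    then have "(y,q) \<in> (ver_rel E)\<^sup>*" by (simp add: col_seg_def)
    from ver_path[OF assms(1) this] assms(2) show "snd q \<le> snd y" by force
  qed
  then show ?thesis unfolding tilt_def
    using the_max_eq[OF col_seg_props(3)[OF assms(1)] col_seg_self] by simp
qed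

lemma hor_nb: "joined E a b \<Longrightarrow> snd a = snd b \<Longrightarrow> b \<in> row_seg E a"
  unfolding row_seg_def hor_rel_def by auto

lemma ver_nb: "joined E a b \<Longrightarrow> fst a = fst b \<Longrightarrow> b \<in> col_seg E a"
  unfolding col_seg_def ver_rel_def by auto

lemma top_nj: assumes "board V E"
  shows "\<not> joined E (tilt E U p) (fst (tilt E U p), snd (tilt E U p) + 1)"
proof
  let ?u = "tilt E U p"
  assume "joined E ?u (fst ?u, snd ?u + 1)"
  then have "(fst ?u, snd ?u + 1) \<in> col_seg E ?u" by (intro ver_nb) auto
  then have "(fst ?u, snd ?u + 1) \<in> col_seg E p" using col_seg_eq[OF tilt_U(1)[OF assms]] by simp
  then show False using tilt_U(2)[OF assms, of p] by force
qed




definition conn :: "pixel set \<Rightarrow> pixel set set \<Rightarrow> pixel set \<Rightarrow> (pixel \<times> pixel) set" where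
  "conn V E S = (large_tilt_graph V E S \<union> (large_tilt_graph V E S)\<inverse>)\<^sup>*"

lemma conn_sym: "(a,b) \<in> conn V E S \<Longrightarrow> (b,a) \<in> conn V E S"
  unfolding conn_def by (metis sym_Un_converse sym_rtrancl symD)

lemma conn_trans: "(a,b) \<in> conn V E S \<Longrightarrow> (b,c) \<in> conn V E S \<Longrightarrow> (a,c) \<in> conn V E S"
  unfolding conn_def by (rule rtrancl_trans)

lemma conn_refl: "(a,a) \<in> conn V E S"
  unfolding conn_def by simp

context
  fixes V E S
  assumes bd: "board V E" and SV: "S \<subseteq> V"
begin

lemma corner_base: "corner_pixel V E c \<Longrightarrow> c \<in> large_tilt_base V E S"
  unfolding large_tilt_base_def by blast

lemma reflex_base: "reflex_corner E v \<Longrightarrow> q \<in> V \<Longrightarrow> q \<in> set (quadrants v) \<Longrightarrow>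
   tilt E d q \<in> large_tilt_base V E S"
  unfolding large_tilt_base_def incident_pixels_def by blast

lemma reach_V: "(c,p) \<in> (full_tilt_graph V E)\<^sup>* \<Longrightarrow> c \<in> V \<Longrightarrow> p \<in> V"
  by (induction rule: rtrancl_induct) (auto simp: full_tilt_graph_def intro: tilt_V[OF bd])

lemma base_V: "x \<in> large_tilt_base V E S \<Longrightarrow> x \<in> V"
  unfolding large_tilt_base_def corner_pixel_def incident_pixels_def
  using reach_V SV tilt_V[OF bd] by blast

lemma W_V: "w \<in> large_tilt_vertices V E S \<Longrightarrow> w \<in> V"
  unfolding large_tilt_vertices_def using base_V by blast

lemma W_intro: "q \<in> V \<Longrightarrow> a \<in> large_tilt_base V E S \<Longrightarrow> b \<in> large_tilt_base V E S \<Longrightarrow>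
   q \<in> row_seg E a \<Longrightarrow> q \<in> col_seg E b \<Longrightarrow> q \<in> large_tilt_vertices V E S"
  unfolding large_tilt_vertices_def by blast

lemma W_col: "w \<in> large_tilt_vertices V E S \<Longrightarrow> \<exists>b\<in>large_tilt_base V E S. w \<in> col_seg E b"
  unfolding large_tilt_vertices_def using col_seg_self by blast

lemma base_W: "x \<in> large_tilt_base V E S \<Longrightarrow> x \<in> large_tilt_vertices V E S"
  unfolding large_tilt_vertices_def by blast

lemma edge_conn: "w \<in> large_tilt_vertices V E S \<Longrightarrow> tilt E d w \<in> large_tilt_vertices V E S \<Longrightarrow>
   (w, tilt E d w) \<in> conn V E S"
proof (cases "tilt E d w = w")
  case True then show ?thesis by (simp add: conn_refl)
next
  case False
  assume a: "w \<in> large_tilt_vertices V E S" "tilt E d w \<in> large_tilt_vertices V E S"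
  then have "(w, tilt E d w) \<in> full_tilt_graph V E"
    using False W_V unfolding full_tilt_graph_def by blast
  then have "(w, tilt E d w) \<in> large_tilt_graph V E S"
    using a unfolding large_tilt_graph_def by blast
  then show ?thesis unfolding conn_def by blast
qed

lemma T_lemma:
  assumes "y \<in> V" "\<not> joined E y (fst y, snd y + 1)"
  shows "tilt E L y \<in> large_tilt_base V E S"
proof -
  define m where "m = Min (fst ` V)"
  have fin: "finite V" using bd by (simp add: board_def)
  have "\<forall>y. nat (fst y - m) = n \<longrightarrow> y \<in> V \<longrightarrow> \<not> joined E y (fst y, snd y + 1) \<longrightarrow>
        tilt E L y \<in> large_tilt_base V E S" for n
  proof (induction n rule: less_induct)
    case (less n)
    show ?case
    proof (intro allI impI)
      fix y assume n: "nat (fst y - m) = n" and yV: "y \<in> V" and nj: "\<not> joined E y (fst y, snd y + 1)"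
      define y' where "y' = (fst y - 1, snd y)"
      show "tilt E L y \<in> large_tilt_base V E S"
      proof (cases "joined E y y'")
        case False
        then have "tilt E L y = y" using no_left[OF bd] by (simp add: y'_def)
        moreover have "tilt E U y = y" using no_up[OF bd nj] .
        ultimately have "corner_pixel V E y" unfolding corner_pixel_def using yV by auto
        then show ?thesis using corner_base \<open>tilt E L y = y\<close> by simp
      next
        case True
        then have y'V: "y' \<in> V" using joined_board[OF bd] by blast
        have yr: "y' \<in> row_seg E y" using True by (intro hor_nb) (auto simp: y'_def)
        show ?thesis
        proof (cases "joined E y' (fst y', snd y' + 1)")
          case True
          have "reflex_corner E (fst y, snd y + 1)"
            unfolding reflex_corner_def
            apply (rule exI[of _ 1])
            using True \<open>joined E y y'\<close> nj
            by (simp add: quadrants_def Let_def y'_def joined_sym)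
          moreover have "y \<in> set (quadrants (fst y, snd y + 1))" by (simp add: quadrants_def)
          ultimately show ?thesis using reflex_base yV by blast
        next
          case False
          have "m \<le> fst y'" using y'V fin unfolding m_def by simp
          then have "nat (fst y' - m) < n" using n by (simp add: y'_def)
          then have "tilt E L y' \<in> large_tilt_base V E S" using less False y'V by blast
          then show ?thesis using tilt_row_eq[OF yr] by simp
        qed
      qed
    qed
  qed
  then show ?thesis using assms by blast
qed

definition H :: "pixel \<Rightarrow> pixel" where "H p = tilt E L (tilt E U p)"

lemma H_base: "p \<in> V \<Longrightarrow> H p \<in> large_tilt_base V E S"
  unfolding H_def by (rule T_lemma[OF tilt_V[OF bd] top_nj[OF bd]])

lemma W_up: assumes "w \<in> large_tilt_vertices V E S" shows "tilt E U w \<in> large_tilt_vertices V E S"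
proof -
  have wV: "w \<in> V" using W_V assms .
  obtain b where b: "b \<in> large_tilt_base V E S" "w \<in> col_seg E b" using W_col assms by blast
  have "tilt E U w \<in> col_seg E w" using tilt_U(1)[OF bd] .
  then have c: "tilt E U w \<in> col_seg E b" using col_seg_eq[OF b(2)] by simp
  have "tilt E L (tilt E U w) \<in> row_seg E (tilt E U w)" using tilt_L(1)[OF bd] .
  then have r: "tilt E U w \<in> row_seg E (H w)" unfolding H_def by (rule row_seg_symm)
  show ?thesis using W_intro[OF tilt_V[OF bd wV] H_base[OF wV] b(1) r c] .
qed

lemma M3: assumes "w \<in> large_tilt_vertices V E S" shows "(w, H w) \<in> conn V E S"
proof -
  have wV: "w \<in> V" using W_V assms .
  have 1: "(w, tilt E U w) \<in> conn V E S" using edge_conn[OF assms W_up[OF assms]] .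
  have "(tilt E U w, H w) \<in> conn V E S" unfolding H_def
    using edge_conn[OF W_up[OF assms]] base_W H_base[OF wV] unfolding H_def by blast
  then show ?thesis using conn_trans 1 by blast
qed

lemma INC: assumes "q \<in> V" "\<And>d. tilt E d q \<in> large_tilt_base V E S"
  shows "q \<in> large_tilt_vertices V E S"
proof -
  have r: "q \<in> row_seg E (tilt E L q)" using row_seg_symm[OF tilt_L(1)[OF bd]] .
  have c: "q \<in> col_seg E (tilt E U q)" using col_seg_symm[OF tilt_U(1)[OF bd]] .
  show ?thesis using W_intro[OF assms(1) assms(2) assms(2) r c] .
qed

lemma reflex_pair:
  assumes "reflex_corner E v" "p' \<in> V" "p \<in> V" "p' \<in> set (quadrants v)" "p \<in> set (quadrants v)"
    "p \<in> row_seg E p'"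
  shows "(H p', H p) \<in> conn V E S"
proof -
  have tb': "\<And>d. tilt E d p' \<in> large_tilt_base V E S" using reflex_base assms by blast
  have tb: "\<And>d. tilt E d p \<in> large_tilt_base V E S" using reflex_base assms by blast
  have W': "p' \<in> large_tilt_vertices V E S" using INC assms(2) tb' .
  have W: "p \<in> large_tilt_vertices V E S" using INC assms(3) tb .
  have 1: "(H p', p') \<in> conn V E S" using conn_sym M3 W' by blast
  have 2: "(p', tilt E L p') \<in> conn V E S" using edge_conn W' base_W tb' by blast
  have 3: "(tilt E L p, p) \<in> conn V E S" using edge_conn W base_W tb conn_sym by blast
  have 4: "(p, H p) \<in> conn V E S" using M3 W .
  have eq: "tilt E L p = tilt E L p'" using tilt_row_eq assms(6) .
  show ?thesis using 1 2 3 4 eq conn_trans by metis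
qed


lemma ladder:
  "\<forall>p'. nat (Max (snd ` V) - snd p') = n \<longrightarrow> p' \<in> V \<longrightarrow> joined E p' (fst p' + 1, snd p') \<longrightarrow>
     (H p', H (fst p' + 1, snd p')) \<in> conn V E S"
proof (induction n rule: less_induct)
  case (less n)
  show ?case
  proof (intro allI impI)
    fix p' assume n: "nat (Max (snd ` V) - snd p') = n" and p'V: "p' \<in> V"
      and j: "joined E p' (fst p' + 1, snd p')"
    define p where "p = (fst p' + 1, snd p')"
    define a where "a = (fst p', snd p' + 1)"
    define b where "b = (fst p' + 1, snd p' + 1)"
    have pV: "p \<in> V" using joined_board[OF bd j] by (simp add: p_def)
    have prow: "p \<in> row_seg E p'" using j by (intro hor_nb) (auto simp: p_def)
    have q: "quadrants (fst p, snd p + 1) = [b, a, p', p]"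
      by (simp add: quadrants_def p_def a_def b_def)
    have inq: "p' \<in> set (quadrants (fst p, snd p + 1))" "p \<in> set (quadrants (fst p, snd p + 1))"
      using q by auto
    show "(H p', H (fst p' + 1, snd p')) \<in> conn V E S"
    proof (cases "\<not> joined E p' a \<and> \<not> joined E p b")
      case True
      have "tilt E U p' = p'" using no_up[OF bd] True by (simp add: a_def)
      moreover have "tilt E U p = p" using no_up[OF bd] True by (simp add: b_def p_def)
      ultimately have "H p = H p'" unfolding H_def using tilt_row_eq[OF prow] by simp
      then show ?thesis by (simp add: p_def[symmetric] conn_refl)
    next
      case False
      show ?thesis
      proof (cases "joined E p' a \<and> joined E p b \<and> joined E a b")
        case True
        have aV: "a \<in> V" using joined_board[OF bd] True by blast
        have "a \<in> col_seg E p'" using True by (intro ver_nb) (auto simp: a_def)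
        then have Ha: "H a = H p'" unfolding H_def using tilt_col_eq by metis
        have "b \<in> col_seg E p" using True by (intro ver_nb) (auto simp: b_def p_def)
        then have Hb: "H b = H p" unfolding H_def using tilt_col_eq by metis
        have "snd a \<le> Max (snd ` V)" using aV bd by (simp add: board_def)
        then have lt: "nat (Max (snd ` V) - snd a) < n" using n by (simp add: a_def)
        have ja: "joined E a (fst a + 1, snd a)" using True by (simp add: a_def b_def)
        have "(H a, H (fst a + 1, snd a)) \<in> conn V E S" using less lt aV ja by blast
        then show ?thesis using Ha Hb by (simp add: a_def b_def p_def)
      next
        case False2: False
        have "reflex_corner E (fst p, snd p + 1)"
        proof (cases "joined E p' a")
          case True
          then have njpb: "\<not> joined E p b \<or> \<not> joined E a b" using False2 False by blast
          show ?thesis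
          proof (cases "joined E p b")
            case True
            then have "\<not> joined E a b" using njpb by blast
            then show ?thesis unfolding reflex_corner_def q
              apply (intro exI[of _ 2])
              using True j by (simp add: Let_def joined_sym p_def)
          next
            case False
            then show ?thesis unfolding reflex_corner_def q
              apply (intro exI[of _ 1])
              using \<open>joined E p' a\<close> j by (simp add: Let_def joined_sym p_def)
          qed
        next
          case False
          then have "joined E p b" using \<open>\<not> (\<not> joined E p' a \<and> \<not> joined E p b)\<close> by blast
          then show ?thesis unfolding reflex_corner_def q
            apply (intro exI[of _ 2])
            using False j by (simp add: Let_def joined_sym p_def)
        qed
        from reflex_pair[OF this p'V pV inq prow] show ?thesis by (simp add: p_def)
      qed
    qed
  qed
qed

lemma H_step: assumes "joined E y z" shows "(H y, H z) \<in> conn V E S"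
proof -
  have jb: "y \<in> V" "z \<in> V" "grid_adj y z" using joined_board[OF bd assms] by auto
  show ?thesis
  proof (cases "fst y = fst z")
    case True
    then have "z \<in> col_seg E y" using assms ver_nb by blast
    then have "H z = H y" unfolding H_def using tilt_col_eq by metis
    then show ?thesis by (simp add: conn_refl)
  next
    case False
    then have s: "snd y = snd z" "fst z = fst y + 1 \<or> fst y = fst z + 1"
      using jb(3) unfolding grid_adj_def by auto
    show ?thesis
    proof (cases "fst z = fst y + 1")
      case True
      then have "z = (fst y + 1, snd y)" using s by (simp add: prod_eq_iff)
      then show ?thesis using ladder jb assms by metis
    next
      case False
      then have "y = (fst z + 1, snd z)" using s by (simp add: prod_eq_iff)
      then have "(H z, H y) \<in> conn V E S" using ladder jb assms joined_sym by metis
      then show ?thesis using conn_sym by blast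
    qed
  qed
qed

end


theorem mainTheorem5:
  fixes V :: "pixel set" and E :: "pixel set set" and S :: "pixel set"
  assumes "connected_board V E"
    and "S \<subseteq> V"
  shows "weakly_connected (large_tilt_vertices V E S) (large_tilt_graph V E S)"
proof -
  have bd: "board V E" and V0: "V \<noteq> {}"
    and cn: "\<forall>p\<in>V. \<forall>q\<in>V. (p, q) \<in> {(a, b). joined E a b}\<^sup>*"
    using assms(1) unfolding connected_board_def by auto
  obtain p0 where p0: "p0 \<in> V" using V0 by blast
  have hp: "(H E p0, H E x) \<in> conn V E S" if "x \<in> V" for x
  proof -
    have "(p0, x) \<in> {(a, b). joined E a b}\<^sup>*" using cn p0 that by blast
    then show ?thesis
    proof (induction rule: rtrancl_induct)
      case base then show ?case by (simp add: conn_refl)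
    next
      case (step y z)
      then have "(H E y, H E z) \<in> conn V E S" using H_step[OF bd assms(2), of y z] by simp
      then show ?case using step.IH conn_trans by blast
    qed
  qed
  show ?thesis unfolding weakly_connected_def
  proof (intro ballI)
    fix w1 w2 assume w1: "w1 \<in> large_tilt_vertices V E S" and w2: "w2 \<in> large_tilt_vertices V E S"
    have a: "(w1, H E w1) \<in> conn V E S" using M3[OF bd assms(2) w1] .
    have b: "(w2, H E w2) \<in> conn V E S" using M3[OF bd assms(2) w2] .
    have c: "(H E p0, H E w1) \<in> conn V E S" using hp W_V[OF bd assms(2) w1] .
    have d: "(H E p0, H E w2) \<in> conn V E S" using hp W_V[OF bd assms(2) w2] .
    have "(w1, w2) \<in> conn V E S" using a b c d conn_sym conn_trans by metis
    then show "(w1, w2) \<in> (large_tilt_graph V E S \<union> (large_tilt_graph V E S)\<inverse>)\<^sup>*"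
      by (simp add: conn_def)
  qed
qed

end
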